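(* Let $K$ be a finite field, $G$ a finite group and $\ell\ge1$. There exists a self-dual quasi-$G$ code over $K$ of index $\ell$ (i.e. a right $KG$-submodule $\mathcal{C}\le KG^\ell$ with $\mathcal{C}=\mathcal{C}^\perp$) if and only if one of the following holds: (i) $|K|\equiv1\pmod 4$ and $2\mid\ell$; (ii) $|K|\equiv3\pmod 4$ and $4\mid\ell$; (iii) $|K|$ is even and ($2\mid\ell$ or $2\mid|G|$).
   Context: Fix an ordering $g_1,\ldots,g_n$ of $G$ and let $\varphi:KG\to K^n$, $\sum_i a_ig_i\mapsto(a_1,\ldots,a_n)$. On $KG^\ell=KG\oplus\cdots\oplus KG$ ($\ell$ copies) define the Euclidean bilinear form $\langle (a_1,\ldots,a_\ell),(b_1,\ldots,b_\ell)\rangle=\sum_{i=1}^\ell\varphi(a_i)\cdot\varphi(b_i)$, where $\cdot$ is the standard inner product on $K^n$. For a right $KG$-submodule $\mathcal{C}\le KG^\ell$ (a quasi-$G$ code of index $\ell$), $\mathcal{C}^\perp=\{v\in KG^\ell:\langle v,c\rangle=0\ \text{for all } c\in\mathcal{C}\}$, and $\mathcal{C}$ is self-dual if $\mathcal{C}=\mathcal{C}^\perp$. *)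

theory Defs
  imports Main
begin

text \<open>The group algebra KG: functions from the finite group G (written as a possibly
  non-commutative group_add, i.e. group operation +, identity 0) to the field K.\<close>

definition ga_mult :: "('g::{group_add,finite} \<Rightarrow> 'k::field) \<Rightarrow> ('g \<Rightarrow> 'k) \<Rightarrow> ('g \<Rightarrow> 'k)" where
  "ga_mult a b = (\<lambda>h. \<Sum>g\<in>UNIV. a g * b (- g + h))"

definition ga_space :: "nat \<Rightarrow> (nat \<Rightarrow> 'g \<Rightarrow> 'k::zero) set" where
  "ga_space l = {v. \<forall>i\<ge>l. \<forall>g. v i g = 0}"

definition ga_rmult :: "(nat \<Rightarrow> 'g::{group_add,finite} \<Rightarrow> 'k::field) \<Rightarrow> ('g \<Rightarrow> 'k) \<Rightarrow> (nat \<Rightarrow> 'g \<Rightarrow> 'k)" where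
  "ga_rmult v a = (\<lambda>i. ga_mult (v i) a)"

definition quasi_G_code :: "nat \<Rightarrow> (nat \<Rightarrow> 'g::{group_add,finite} \<Rightarrow> 'k::field) set \<Rightarrow> bool" where
  "quasi_G_code l C \<longleftrightarrow> C \<subseteq> ga_space l \<and> (\<lambda>i g. 0) \<in> C
     \<and> (\<forall>v\<in>C. \<forall>w\<in>C. (\<lambda>i g. v i g + w i g) \<in> C)
     \<and> (\<forall>v\<in>C. \<forall>a. ga_rmult v a \<in> C)"

definition ga_form :: "nat \<Rightarrow> (nat \<Rightarrow> 'g::finite \<Rightarrow> 'k::comm_ring) \<Rightarrow> (nat \<Rightarrow> 'g \<Rightarrow> 'k) \<Rightarrow> 'k" where
  "ga_form l v w = (\<Sum>i<l. \<Sum>g\<in>UNIV. v i g * w i g)"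

definition ga_dual :: "nat \<Rightarrow> (nat \<Rightarrow> 'g::finite \<Rightarrow> 'k::comm_ring) set \<Rightarrow> (nat \<Rightarrow> 'g \<Rightarrow> 'k) set" where
  "ga_dual l C = {v \<in> ga_space l. \<forall>c\<in>C. ga_form l v c = 0}"

end

theory Submission
  imports Defs "Jordan_Normal_Form.Determinant" "HOL-Library.FuncSet" "HOL-Algebra.Sylow"
    "HOL-Computational_Algebra.Polynomial"
begin

lemma invol_even:
  assumes "finite A" "\<forall>x\<in>A. f x \<in> A \<and> f (f x) = x \<and> f x \<noteq> x"
  shows "even (card A)"
  using assms
proof (induction "card A" arbitrary: A rule: less_induct)
  case less
  show ?case
  proof (cases "A = {}")
    case True then show ?thesis by simp
  next
    case False
    then obtain x where x: "x \<in> A" by blast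
    let ?A' = "A - {x, f x}"
    have fx: "f x \<in> A" "f x \<noteq> x" using less.prems x by auto
    have c: "card A = card ?A' + 2"
    proof -
      have "card ?A' = card A - card {x, f x}"
        using less.prems(1) x fx by (intro card_Diff_subset) auto
      moreover have "card {x, f x} = 2" using fx by simp
      moreover have "card A \<ge> 2"
      proof -
        have "card {x, f x} \<le> card A" using less.prems(1) x fx by (intro card_mono) auto
        thus ?thesis using fx by simp
      qed
      ultimately show ?thesis by simp
    qed
    have "\<forall>y\<in>?A'. f y \<in> ?A' \<and> f (f y) = y \<and> f y \<noteq> y"
    proof
      fix y assume y: "y \<in> ?A'"
      have a: "f y \<in> A" "f (f y) = y" "f y \<noteq> y" using less.prems(2) y by auto
      have b: "f y \<noteq> x"
      proof
        assume "f y = x" hence "f x = y" using a(2) by simp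
        thus False using y by simp
      qed
      have c: "f y \<noteq> f x"
      proof
        assume "f y = f x" hence "f (f y) = f (f x)" by simp
        hence "y = x" using a(2) less.prems(2) x by simp
        thus False using y by simp
      qed
      show "f y \<in> ?A' \<and> f (f y) = y \<and> f y \<noteq> y" using a b c by simp
    qed
    hence "even (card ?A')" using less.hyps[of ?A'] less.prems(1) c by simp
    thus ?thesis using c by simp
  qed
qed

lemma two_zero_iff: "((2::'k::{field,finite}) = 0) \<longleftrightarrow> even (card (UNIV::'k set))"
proof
  assume h: "(2::'k) = 0"
  show "even (card (UNIV::'k set))"
  proof (rule invol_even[of UNIV "\<lambda>x. x + 1"])
    show "\<forall>x\<in>(UNIV::'k set). x + 1 \<in> UNIV \<and> x + 1 + 1 = x \<and> x + 1 \<noteq> x"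
      using h by (simp add: add.assoc)
  qed simp
next
  assume e: "even (card (UNIV::'k set))"
  show "(2::'k) = 0"
  proof (rule ccontr)
    assume h: "(2::'k) \<noteq> 0"
    have "even (card (UNIV - {0::'k}))"
    proof (rule invol_even[of _ "\<lambda>x. - x"])
      show "\<forall>x\<in>UNIV - {0::'k}. - x \<in> UNIV - {0} \<and> - (- x) = x \<and> - x \<noteq> x"
      proof
        fix x :: 'k assume "x \<in> UNIV - {0}"
        hence x: "x \<noteq> 0" by simp
        have "- x \<noteq> x"
        proof
          assume "- x = x"
          hence "2 * x = 0" by (metis add.inverse_inverse add_eq_0_iff mult_2)
          thus False using h x by simp
        qed
        thus "- x \<in> UNIV - {0} \<and> - (- x) = x \<and> - x \<noteq> x" using x by simp
      qed
    qed simp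
    moreover have "card (UNIV - {0::'k}) = card (UNIV::'k set) - 1" by (simp add: card_Diff_singleton)
    moreover have "card (UNIV::'k set) \<ge> 1" by (simp add: Suc_leI finite_UNIV_card_ge_0)
    ultimately show False using e by (metis One_nat_def even_diff_nat odd_one le_add_diff_inverse2 even_add)
  qed
qed

lemma fermat_field:
  fixes x :: "'k::{field,finite}"
  assumes "x \<noteq> 0"
  shows "x ^ (card (UNIV::'k set) - 1) = 1"
proof -
  let ?A = "UNIV - {0::'k}"
  have inj: "inj_on ((*) x) ?A" using assms by (auto simp: inj_on_def)
  have img: "(*) x ` ?A = ?A"
  proof
    show "(*) x ` ?A \<subseteq> ?A" using assms by auto
    show "?A \<subseteq> (*) x ` ?A"
    proof
      fix y assume "y \<in> ?A"
      hence "y = x * (y / x)" "y / x \<in> ?A" using assms by auto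
      thus "y \<in> (*) x ` ?A" by blast
    qed
  qed
  have "prod (\<lambda>y. y) ?A = prod (\<lambda>y. x * y) ?A"
    using prod.reindex[OF inj, of "\<lambda>y. y"] img by simp
  also have "\<dots> = x ^ card ?A * prod (\<lambda>y. y) ?A"
    by (simp add: prod.distrib)
  finally have h: "prod (\<lambda>y. y) ?A = x ^ card ?A * prod (\<lambda>y. y) ?A" .
  have P0: "prod (\<lambda>y. y) ?A \<noteq> 0" by simp
  have "(x ^ card ?A - 1) * prod (\<lambda>y. y) ?A = 0" using h by (simp add: algebra_simps)
  hence "x ^ card ?A = 1" using P0 by simp
  moreover have "card ?A = card (UNIV::'k set) - 1" by (simp add: card_Diff_singleton)
  ultimately show ?thesis by simp
qed

lemma odd_mod4: "odd (q::nat) \<Longrightarrow> q mod 4 = 1 \<or> q mod 4 = 3"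
  by presburger

lemma sqrt_m1_mod4:
  fixes i :: "'k::{field,finite}"
  assumes "odd (card (UNIV::'k set))" "i * i = -1"
  shows "card (UNIV::'k set) mod 4 = 1"
proof (rule ccontr)
  let ?q = "card (UNIV::'k set)"
  assume "?q mod 4 \<noteq> 1"
  hence "?q mod 4 = 3" using odd_mod4 assms(1) by blast
  define j where "j = ?q div 4"
  have j: "?q - 1 = 4 * j + 2" unfolding j_def using \<open>?q mod 4 = 3\<close> div_mult_mod_eq[of ?q 4] by linarith
  have i0: "i \<noteq> 0" using assms(2) by auto
  have "i ^ (?q - 1) = 1" using fermat_field[OF i0] .
  moreover have "i ^ (4 * j + 2) = - 1"
  proof -
    have "i ^ 4 = (i * i) * (i * i)" by (simp add: power4_eq_xxxx mult.assoc)
    also have "\<dots> = 1" using assms(2) by simp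
    finally have "i ^ 4 = 1" .
    hence "i ^ (4 * j) = 1" by (simp add: power_mult)
    thus ?thesis using assms(2) by (simp add: power_add power2_eq_square)
  qed
  ultimately have "(-1::'k) = 1" using j by simp
  hence "(2::'k) = 0"
  proof -
    assume m: "(-1::'k) = 1"
    have "(2::'k) = 1 - (-1)" by simp
    also have "\<dots> = 0" using m by simp
    finally show ?thesis .
  qed
  thus False using two_zero_iff assms(1) by blast
qed

lemma sq_count:
  "card (UNIV - {0::'k::{field,finite}}) \<le> 2 * card {y * y | y. y \<noteq> (0::'k)}"
proof -
  let ?S = "{y * y | y. y \<noteq> (0::'k)}"
  have sub: "UNIV - {0::'k} \<subseteq> (\<Union>s\<in>?S. {y. y \<noteq> 0 \<and> y * y = s})"
  proof
    fix y :: 'k assume "y \<in> UNIV - {0}"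
    hence y: "y \<noteq> 0" by simp
    hence "y * y \<in> ?S" by blast
    moreover have "y \<in> {y'. y' \<noteq> 0 \<and> y' * y' = y * y}" using y by simp
    ultimately show "y \<in> (\<Union>s\<in>?S. {y. y \<noteq> 0 \<and> y * y = s})" by blast
  qed
  have fib: "card {y. y \<noteq> 0 \<and> y * y = s} \<le> 2" if sS: "s \<in> ?S" for s
  proof -
    obtain y0 where y0: "y0 \<noteq> 0" "s = y0 * y0" using sS by blast
    have "{y. y \<noteq> 0 \<and> y * y = s} \<subseteq> {y0, - y0}"
    proof
      fix y assume "y \<in> {y. y \<noteq> 0 \<and> y * y = s}"
      hence "y * y = y0 * y0" using y0 by simp
      hence "y = y0 \<or> y = - y0" by (simp only: square_eq_iff)
      thus "y \<in> {y0, - y0}" by simp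
    qed
    hence "card {y. y \<noteq> 0 \<and> y * y = s} \<le> card {y0, - y0}" by (intro card_mono) auto
    also have "\<dots> \<le> 2" by (simp add: card_insert_if)
    finally show ?thesis .
  qed
  have "card (UNIV - {0::'k}) \<le> card (\<Union>s\<in>?S. {y. y \<noteq> 0 \<and> y * y = s})"
    by (intro card_mono sub) simp
  also have "\<dots> \<le> (\<Sum>s\<in>?S. card {y. y \<noteq> 0 \<and> y * y = s})"
    by (rule card_UN_le) simp
  also have "\<dots> \<le> (\<Sum>s\<in>?S. 2)" by (intro sum_mono fib)
  also have "\<dots> = 2 * card ?S" by simp
  finally show ?thesis .
qed

lemma sqrt_m1_exists:
  assumes "card (UNIV::'k::{field,finite} set) mod 4 = 1"
  shows "\<exists>i::'k. i * i = -1"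
proof -
  let ?q = "card (UNIV::'k set)"
  let ?S = "{y * y | y. y \<noteq> (0::'k)}"
  define h where "h = (?q - 1) div 2"
  have qge: "?q \<ge> 2"
  proof -
    have "card {0::'k, 1} \<le> ?q" by (intro card_mono) auto
    thus ?thesis by simp
  qed
  have q5: "?q \<ge> 5" using assms qge by presburger
  have h2: "?q - 1 = 2 * h" "even h" "h \<ge> 1" unfolding h_def using assms q5 by presburger+
  define p where "p = monom (1::'k) h - 1"
  have polyp: "poly p x = x ^ h - 1" for x unfolding p_def by (simp add: poly_monom)
  have degp: "degree p \<le> h" unfolding p_def
    by (intro degree_diff_le) (auto simp: degree_monom_eq)
  have p0: "p \<noteq> 0"
  proof
    assume "p = 0" hence "poly p 0 = 0" by simp
    thus False using polyp[of 0] h2(3) by (simp add: power_0_left)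
  qed
  let ?R = "{x. poly p x = 0}"
  have SR: "?S \<subseteq> ?R"
  proof
    fix s assume "s \<in> ?S"
    then obtain y where y: "y \<noteq> 0" "s = y * y" by auto
    have "s ^ h = y ^ (2 * h)" using y by (simp add: power_mult power2_eq_square)
    also have "\<dots> = 1" using fermat_field[OF y(1)] h2(1) by simp
    finally show "s \<in> ?R" by (simp add: polyp)
  qed
  have "card ?R \<le> h" using card_poly_roots_bound[OF p0] degp by simp
  moreover have "?q - 1 \<le> 2 * card ?S" using sq_count[where 'k='k] by (simp add: card_Diff_singleton)
  ultimately have RS: "card ?R \<le> card ?S" using h2 by simp
  have fin: "finite ?R" by (rule poly_roots_finite[OF p0])
  have "card ?S \<le> card ?R" by (rule card_mono[OF fin SR])
  hence "card ?S = card ?R" using RS by simp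
  hence "?S = ?R" by (rule card_subset_eq[OF fin SR])
  moreover have "(-1::'k) \<in> ?R" using h2(2) by (simp add: polyp)
  ultimately have "(-1::'k) \<in> ?S" by simp
  thus ?thesis by auto
qed

lemma sum_two_sq:
  assumes "odd (card (UNIV::'k::{field,finite} set))"
  shows "\<exists>a b::'k. a * a + b * b = -1"
proof (rule ccontr)
  assume na: "\<not> ?thesis"
  let ?q = "card (UNIV::'k set)"
  let ?S = "{y * y | y. y \<noteq> (0::'k)}"
  let ?T = "insert 0 ?S"
  let ?B = "(\<lambda>s. -1 - s) ` ?T"
  have "card (UNIV - {0::'k}) = ?q - 1" by (simp add: card_Diff_singleton)
  moreover have "?q \<ge> 1" by (simp add: Suc_leI finite_UNIV_card_ge_0)
  ultimately have f1: "?q \<le> 2 * card ?S + 1" using sq_count[where 'k='k] by linarith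
  have f2: "card ?T = card ?S + 1" by (simp add: card_insert_if)
  have f3: "card ?B = card ?T" by (intro card_image) (auto simp: inj_on_def)
  have "?T \<inter> ?B = {}"
  proof -
    { fix x assume "x \<in> ?T" "x \<in> ?B"
      then obtain a b where "x = a * a" "x = -1 - b * b" by force
      hence "a * a + b * b = -1" by (simp add: algebra_simps)
      hence False using na by blast }
    thus ?thesis by blast
  qed
  hence f4: "card (?T \<union> ?B) = card ?T + card ?B" by (intro card_Un_disjoint) auto
  have f5: "card (?T \<union> ?B) \<le> ?q" by (intro card_mono) auto
  have lem: "\<And>a b c d q::nat. q \<le> 2*a+1 \<Longrightarrow> b = a+1 \<Longrightarrow> c = b \<Longrightarrow> d = b + c \<Longrightarrow> d \<le> q \<Longrightarrow> False"
    by linarith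
  show False by (rule lem[OF f1 f2 f3 f4 f5])
qed

definition blk :: "nat \<Rightarrow> (nat \<Rightarrow> 'g \<Rightarrow> 'k::zero) \<Rightarrow> nat \<Rightarrow> 'g \<Rightarrow> nat \<Rightarrow> 'k" where
  "blk d v j g = (\<lambda>t. if t < d then v (d * j + t) g else 0)"

definition blk_code :: "nat \<Rightarrow> nat \<Rightarrow> (nat \<Rightarrow> 'k) set \<Rightarrow> (nat \<Rightarrow> 'g \<Rightarrow> 'k::field) set" where
  "blk_code l d B = {v \<in> ga_space l. \<forall>j g. d * j < l \<longrightarrow> blk d v j g \<in> B}"

locale blkB =
  fixes d :: nat and B :: "(nat \<Rightarrow> 'k::field) set"
  assumes d0: "d > 0"
    and supp: "\<And>x t. x \<in> B \<Longrightarrow> t \<ge> d \<Longrightarrow> x t = 0"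
    and zero: "(\<lambda>t. 0) \<in> B"
    and add: "\<And>x y. x \<in> B \<Longrightarrow> y \<in> B \<Longrightarrow> (\<lambda>t. x t + y t) \<in> B"
    and smult: "\<And>x c. x \<in> B \<Longrightarrow> (\<lambda>t. c * x t) \<in> B"
    and sd: "\<And>x. (\<forall>t\<ge>d. x t = 0) \<Longrightarrow> ((\<forall>b\<in>B. (\<Sum>t<d. x t * b t) = 0) \<longleftrightarrow> x \<in> B)"
begin

lemma sumB:
  assumes "finite S" "\<And>s. s \<in> S \<Longrightarrow> f s \<in> B"
  shows "(\<lambda>t. \<Sum>s\<in>S. f s t) \<in> B"
  using assms
proof (induction S rule: finite_induct)
  case empty then show ?case using zero by simp
next
  case (insert s S)
  then show ?case using add[of "f s" "\<lambda>t. \<Sum>s\<in>S. f s t"] by simp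
qed

lemma orth: "x \<in> B \<Longrightarrow> y \<in> B \<Longrightarrow> (\<Sum>t<d. x t * y t) = 0"
  using sd[of x] supp by blast

end

lemma sum_blocks: "(\<Sum>i<(d::nat) * m. f i) = (\<Sum>j<m. \<Sum>t<d. f (d * j + t))"
proof (induction m)
  case 0 then show ?case by simp
next
  case (Suc m)
  have "{..<d * Suc m} = {..<d * m} \<union> {d * m..<d * m + d}" by auto
  hence "(\<Sum>i<d * Suc m. f i) = (\<Sum>i<d * m. f i) + (\<Sum>i\<in>{d * m..<d * m + d}. f i)"
    by (simp add: sum.union_disjoint ivl_disj_int)
  also have "(\<Sum>i\<in>{d * m..<d * m + d}. f i) = (\<Sum>t<d. f (d * m + t))"
    using sum.shift_bounds_nat_ivl[of f 0 "d*m" d] by (simp add: lessThan_atLeast0 add.commute)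
  finally show ?case using Suc by simp
qed

lemma blk_idx:
  fixes d j j' t :: nat
  assumes "t < d" "d * j \<le> d * j' + t" "d * j' + t < d * j + d"
  shows "j' = j"
proof (rule ccontr)
  assume "j' \<noteq> j"
  then consider "j' < j" | "j < j'" by linarith
  thus False
  proof cases
    case 1 hence "Suc j' \<le> j" by simp
    hence "d * Suc j' \<le> d * j" by (rule mult_le_mono2)
    thus False using assms by simp
  next
    case 2 hence "Suc j \<le> j'" by simp
    hence "d * Suc j \<le> d * j'" by (rule mult_le_mono2)
    thus False using assms by simp
  qed
qed

lemma blk_code_ok:
  assumes B: "blkB d B" and dl: "d dvd l"
  shows "quasi_G_code l (blk_code l d B :: (nat \<Rightarrow> 'g::{group_add,finite} \<Rightarrow> 'k::field) set)
         \<and> ga_dual l (blk_code l d B :: (nat \<Rightarrow> 'g \<Rightarrow> 'k) set) = blk_code l d B"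
proof -
  interpret blkB d B by (rule B)
  obtain m where lm: "l = d * m" using dl by blast
  let ?C = "blk_code l d B :: (nat \<Rightarrow> 'g \<Rightarrow> 'k) set"
  have q: "quasi_G_code l ?C"
    unfolding quasi_G_code_def
  proof (intro conjI ballI allI)
    show "?C \<subseteq> ga_space l" unfolding blk_code_def by auto
    show "(\<lambda>i g. 0) \<in> ?C" unfolding blk_code_def ga_space_def blk_def using zero
      by (simp add: if_distrib[symmetric] cong: if_cong)
    fix v w assume v: "v \<in> ?C" and w: "w \<in> ?C"
    show "(\<lambda>i g. v i g + w i g) \<in> ?C"
      unfolding blk_code_def ga_space_def
    proof (intro CollectI conjI allI impI)
      fix j g assume "d * j < l"
      hence "(\<lambda>t. blk d v j g t + blk d w j g t) \<in> B"
        using v w add unfolding blk_code_def by auto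
      moreover have "(\<lambda>t. blk d v j g t + blk d w j g t) = blk d (\<lambda>i g. v i g + w i g) j g"
        unfolding blk_def by auto
      ultimately show "blk d (\<lambda>i g. v i g + w i g) j g \<in> B" by simp
    qed (use v w in \<open>auto simp: blk_code_def ga_space_def\<close>)
  next
    fix v a assume v: "v \<in> ?C"
    show "ga_rmult v a \<in> ?C"
      unfolding blk_code_def ga_space_def
    proof (intro CollectI conjI allI impI)
      fix i g assume "i \<ge> l"
      thus "ga_rmult v a i g = 0" using v
        by (auto simp: blk_code_def ga_space_def ga_rmult_def ga_mult_def)
    next
      fix j g assume jl: "d * j < l"
      have "(\<lambda>t. \<Sum>g'\<in>UNIV. a (- g' + g) * blk d v j g' t) \<in> B"
        by (rule sumB) (use v jl smult in \<open>auto simp: blk_code_def\<close>)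
      moreover have "(\<lambda>t. \<Sum>g'\<in>UNIV. a (- g' + g) * blk d v j g' t) = blk d (ga_rmult v a) j g"
        unfolding blk_def ga_rmult_def ga_mult_def by (auto simp: mult.commute)
      ultimately show "blk d (ga_rmult v a) j g \<in> B" by simp
    qed
  qed
  have form: "ga_form l v c = (\<Sum>j<m. \<Sum>g\<in>UNIV. \<Sum>t<d. blk d v j g t * blk d c j g t)" for v c :: "nat \<Rightarrow> 'g \<Rightarrow> 'k"
    unfolding ga_form_def lm sum_blocks
    by (intro sum.cong refl, subst sum.swap) (simp add: blk_def)
  have "ga_dual l ?C = ?C"
  proof
    show "?C \<subseteq> ga_dual l ?C"
    proof
      fix v assume v: "v \<in> ?C"
      have "ga_form l v c = 0" if c: "c \<in> ?C" for c
      proof -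
        have "\<And>j g. j < m \<Longrightarrow> (\<Sum>t<d. blk d v j g t * blk d c j g t) = 0"
        proof -
          fix j g assume "j < m"
          hence "d * j < l" using lm d0 by simp
          thus "(\<Sum>t<d. blk d v j g t * blk d c j g t) = 0"
            using v c orth unfolding blk_code_def by auto
        qed
        thus ?thesis unfolding form by simp
      qed
      thus "v \<in> ga_dual l ?C" using v unfolding ga_dual_def blk_code_def by auto
    qed
  next
    show "ga_dual l ?C \<subseteq> ?C"
    proof
      fix v assume v: "v \<in> ga_dual l ?C"
      have vs: "v \<in> ga_space l" using v unfolding ga_dual_def by auto
      have "blk d v j g \<in> B" if jl: "d * j < l" for j g
      proof -
        have jm: "j < m" using jl lm by simp
        have "\<forall>b\<in>B. (\<Sum>t<d. blk d v j g t * b t) = 0"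
        proof
          fix b assume b: "b \<in> B"
          define c :: "nat \<Rightarrow> 'g \<Rightarrow> 'k" where
            "c = (\<lambda>i g'. if g' = g \<and> d * j \<le> i \<and> i < d * j + d then b (i - d * j) else 0)"
          have blkc: "blk d c j' g' = (if j' = j \<and> g' = g then b else (\<lambda>t. 0))" for j' g'
          proof (cases "j' = j \<and> g' = g")
            case True
            then show ?thesis using supp[OF b] unfolding blk_def c_def by (auto simp: fun_eq_iff)
          next
            case False
            then show ?thesis unfolding blk_def c_def using blk_idx[of _ d j j'] by (auto simp: fun_eq_iff)
          qed
          have cC: "c \<in> ?C"
            unfolding blk_code_def
          proof (intro CollectI conjI allI impI)
            have "d * j + d \<le> l" using jm lm
              by (metis add.commute mult_Suc_right mult_le_mono2 Suc_leI)
            thus "c \<in> ga_space l" unfolding ga_space_def c_def by auto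
            fix j' g' show "blk d c j' g' \<in> B" using blkc b zero by auto
          qed
          have "ga_form l v c = 0" using v cC unfolding ga_dual_def by auto
          moreover have "ga_form l v c = (\<Sum>t<d. blk d v j g t * b t)"
          proof -
            have "ga_form l v c = (\<Sum>j'<m. \<Sum>g'\<in>UNIV. \<Sum>t<d. blk d v j' g' t * blk d c j' g' t)"
              by (rule form)
            also have "\<dots> = (\<Sum>j'<m. if j' = j then (\<Sum>t<d. blk d v j g t * b t) else 0)"
            proof (intro sum.cong refl)
              fix j' assume "j' \<in> {..<m}"
              have e: "(\<Sum>t<d. blk d v j' g' t * blk d c j' g' t) =
                    (if j' = j \<and> g' = g then (\<Sum>t<d. blk d v j g t * b t) else 0)" for g'
                by (simp add: blkc)
              show "(\<Sum>g'\<in>UNIV. \<Sum>t<d. blk d v j' g' t * blk d c j' g' t) =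
                    (if j' = j then (\<Sum>t<d. blk d v j g t * b t) else 0)"
                unfolding e by (cases "j' = j") auto
            qed
            also have "\<dots> = (\<Sum>t<d. blk d v j g t * b t)" using jm by simp
            finally show ?thesis .
          qed
          ultimately show "(\<Sum>t<d. blk d v j g t * b t) = 0" by simp
        qed
        thus ?thesis using sd[of "blk d v j g"] unfolding blk_def by auto
      qed
      thus "v \<in> ?C" using vs unfolding blk_code_def by auto
    qed
  qed
  with q show ?thesis by simp
qed

definition vsp :: "'a set \<Rightarrow> ('a \<Rightarrow> 'k::zero) set" where
  "vsp I = {x. \<forall>a. a \<notin> I \<longrightarrow> x a = 0}"

lemma card_vsp:
  assumes "finite I"
  shows "card (vsp I :: ('a \<Rightarrow> 'k::{zero,finite}) set) = card (UNIV::'k set) ^ card I"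
proof -
  have inj: "inj_on (\<lambda>x. restrict x I) (vsp I :: ('a \<Rightarrow> 'k) set)"
  proof (rule inj_onI)
    fix x y :: "'a \<Rightarrow> 'k" assume "x \<in> vsp I" "y \<in> vsp I" "restrict x I = restrict y I"
    note eq = this
    show "x = y"
    proof
      fix a show "x a = y a"
      proof (cases "a \<in> I")
        case True thus ?thesis using fun_cong[OF eq(3), of a] by simp
      next
        case False thus ?thesis using eq(1,2) unfolding vsp_def by simp
      qed
    qed
  qed
  have img: "(\<lambda>x. restrict x I) ` (vsp I :: ('a \<Rightarrow> 'k) set) = PiE I (\<lambda>_. UNIV)"
  proof
    show "(\<lambda>x. restrict x I) ` (vsp I :: ('a \<Rightarrow> 'k) set) \<subseteq> PiE I (\<lambda>_. UNIV)" by auto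
    show "PiE I (\<lambda>_. UNIV) \<subseteq> (\<lambda>x. restrict x I) ` (vsp I :: ('a \<Rightarrow> 'k) set)"
    proof
      fix g :: "'a \<Rightarrow> 'k" assume g: "g \<in> PiE I (\<lambda>_. UNIV)"
      let ?x = "\<lambda>a. if a \<in> I then g a else 0"
      have xv: "?x \<in> vsp I" unfolding vsp_def by auto
      have "g = restrict ?x I" using g by (auto simp: restrict_def PiE_def extensional_def)
      thus "g \<in> (\<lambda>x. restrict x I) ` vsp I" using xv by (rule image_eqI)
    qed
  qed
  have "card (vsp I :: ('a \<Rightarrow> 'k) set) = card (PiE I (\<lambda>_. (UNIV :: 'k set)))"
    using card_image[OF inj] img by simp
  also have "\<dots> = card (UNIV::'k set) ^ card I" using assms by (simp add: card_PiE)
  finally show ?thesis .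
qed

lemma card_le_orth:
  fixes M :: "'b \<Rightarrow> 'a \<Rightarrow> 'k::{field,finite}"
  assumes A: "finite A" and B: "finite B"
    and orth: "\<And>a a'. a \<in> A \<Longrightarrow> a' \<in> A \<Longrightarrow> (\<Sum>b\<in>B. M b a * M b a') = - (if a = a' then 1 else 0)"
  shows "card A \<le> card B"
proof -
  define \<Phi> where "\<Phi> = (\<lambda>y::'a \<Rightarrow> 'k. (\<lambda>b. if b \<in> B then (\<Sum>a\<in>A. M b a * y a) else 0))"
  have key: "(\<Sum>b\<in>B. M b a * \<Phi> y b) = - y a" if "a \<in> A" for y a
  proof -
    have "(\<Sum>b\<in>B. M b a * \<Phi> y b) = (\<Sum>b\<in>B. \<Sum>a'\<in>A. M b a * (M b a' * y a'))"
      unfolding \<Phi>_def by (simp add: sum_distrib_left)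
    also have "\<dots> = (\<Sum>a'\<in>A. \<Sum>b\<in>B. M b a * (M b a' * y a'))" by (rule sum.swap)
    also have "\<dots> = (\<Sum>a'\<in>A. (\<Sum>b\<in>B. M b a * M b a') * y a')"
      by (simp add: sum_distrib_right mult.assoc)
    also have "\<dots> = (\<Sum>a'\<in>A. - (if a = a' then y a' else 0))"
      using orth[OF that] by (intro sum.cong refl) simp
    also have "\<dots> = - y a" using that A by (simp add: sum_negf)
    finally show ?thesis .
  qed
  have inj: "inj_on \<Phi> (vsp A)"
  proof (rule inj_onI)
    fix y y' :: "'a \<Rightarrow> 'k" assume y: "y \<in> vsp A" and y': "y' \<in> vsp A" and e: "\<Phi> y = \<Phi> y'"
    show "y = y'"
    proof
      fix a show "y a = y' a"
      proof (cases "a \<in> A")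
        case True
        have "- y a = - y' a" using key[OF True, of y] key[OF True, of y'] e by simp
        thus ?thesis by simp
      next
        case False thus ?thesis using y y' unfolding vsp_def by simp
      qed
    qed
  qed
  have "\<Phi> ` vsp A \<subseteq> vsp B" unfolding vsp_def \<Phi>_def by auto
  moreover have "finite (vsp B :: ('b \<Rightarrow> 'k) set)"
    using card_vsp[OF B, where 'k='k] by (intro card_ge_0_finite) (simp add: finite_UNIV_card_ge_0)
  ultimately have "card (vsp A :: ('a \<Rightarrow> 'k) set) \<le> card (vsp B :: ('b \<Rightarrow> 'k) set)"
    using card_inj_on_le[OF inj] by blast
  hence "card (UNIV::'k set) ^ card A \<le> card (UNIV::'k set) ^ card B"
    using card_vsp[OF A, where 'k='k] card_vsp[OF B, where 'k='k] by simp
  moreover have "card (UNIV::'k set) \<ge> 2"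
  proof -
    have "card {0::'k, 1} \<le> card (UNIV::'k set)" by (intro card_mono) auto
    thus ?thesis by simp
  qed
  ultimately show ?thesis by (simp add: power_le_imp_le_exp)
qed

lemma det_sq:
  fixes X :: "'b \<Rightarrow> 'a \<Rightarrow> 'k::field"
  assumes S: "finite S" and T: "finite T" and cST: "card T = card S"
    and orth: "\<And>s s'. s \<in> S \<Longrightarrow> s' \<in> S \<Longrightarrow> (\<Sum>t\<in>T. X t s * X t s') = - (if s = s' then 1 else 0)"
  shows "\<exists>z::'k. z * z = (-1) ^ card S"
proof -
  let ?k = "card S"
  obtain \<sigma> where \<sigma>: "bij_betw \<sigma> {0..<?k} S" using ex_bij_betw_nat_finite[OF S] by blast
  obtain \<tau> where \<tau>: "bij_betw \<tau> {0..<?k} T" using ex_bij_betw_nat_finite[OF T] cST by auto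
  define A where "A = mat ?k ?k (\<lambda>(i,j). X (\<tau> i) (\<sigma> j))"
  have Ac: "A \<in> carrier_mat ?k ?k" unfolding A_def by simp
  have "transpose_mat A * A = (-1) \<cdot>\<^sub>m 1\<^sub>m ?k"
  proof (rule eq_matI)
    fix i j assume i: "i < dim_row ((-1) \<cdot>\<^sub>m 1\<^sub>m ?k :: 'k mat)" and j: "j < dim_col ((-1) \<cdot>\<^sub>m 1\<^sub>m ?k :: 'k mat)"
    hence ik: "i < ?k" and jk: "j < ?k" by auto
    have "(transpose_mat A * A) $$ (i,j) = (\<Sum>r\<in>{0..<?k}. X (\<tau> r) (\<sigma> i) * X (\<tau> r) (\<sigma> j))"
      using ik jk unfolding A_def by (simp add: scalar_prod_def)
    also have "\<dots> = (\<Sum>t\<in>T. X t (\<sigma> i) * X t (\<sigma> j))"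
      by (rule sum.reindex_bij_betw[OF \<tau>])
    also have "\<dots> = - (if \<sigma> i = \<sigma> j then 1 else 0)"
      using orth \<sigma> ik jk by (simp add: bij_betw_apply)
    also have "\<dots> = - (if i = j then 1 else 0)"
      using \<sigma> ik jk by (auto simp: bij_betw_def inj_on_def)
    also have "\<dots> = ((-1) \<cdot>\<^sub>m 1\<^sub>m ?k) $$ (i,j)" using ik jk by simp
    finally show "(transpose_mat A * A) $$ (i,j) = ((-1) \<cdot>\<^sub>m 1\<^sub>m ?k) $$ (i,j)" .
  qed (auto simp: A_def)
  hence "det (transpose_mat A * A) = det ((-1) \<cdot>\<^sub>m 1\<^sub>m ?k :: 'k mat)" by simp
  moreover have "det (transpose_mat A * A) = det A * det A"
    using det_mult[of "transpose_mat A" ?k A] Ac det_transpose[OF Ac] by simp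
  moreover have "det ((-1) \<cdot>\<^sub>m 1\<^sub>m ?k :: 'k mat) = (-1) ^ ?k" by simp
  ultimately have "det A * det A = (-1) ^ ?k" by simp
  thus ?thesis by blast
qed

locale lagr =
  fixes I :: "'a set" and L :: "('a \<Rightarrow> 'k::{field,finite}) set"
  assumes finI: "finite I"
    and Lsub: "L \<subseteq> vsp I"
    and L0: "(\<lambda>a. 0) \<in> L"
    and Ladd: "\<And>x y. x \<in> L \<Longrightarrow> y \<in> L \<Longrightarrow> (\<lambda>a. x a + y a) \<in> L"
    and Lsm: "\<And>x c. x \<in> L \<Longrightarrow> (\<lambda>a. c * x a) \<in> L"
    and Lsd: "\<And>x. x \<in> vsp I \<Longrightarrow> (x \<in> L \<longleftrightarrow> (\<forall>y\<in>L. (\<Sum>a\<in>I. x a * y a) = 0))"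
begin

lemma Lsum:
  assumes "finite S" "\<And>s. s \<in> S \<Longrightarrow> f s \<in> L"
  shows "(\<lambda>a. \<Sum>s\<in>S. f s a) \<in> L"
  using assms
proof (induction S rule: finite_induct)
  case empty then show ?case using L0 by simp
next
  case (insert s S)
  then show ?case using Ladd[of "f s" "\<lambda>a. \<Sum>s\<in>S. f s a"] by simp
qed

lemma Ldiff: "x \<in> L \<Longrightarrow> y \<in> L \<Longrightarrow> (\<lambda>a. x a - y a) \<in> L"
  using Ladd[of x "\<lambda>a. (-1) * y a"] Lsm[of y "-1"] by simp

lemma Lvsp: "x \<in> L \<Longrightarrow> a \<notin> I \<Longrightarrow> x a = 0"
  using Lsub unfolding vsp_def by auto

lemma Lorth: "x \<in> L \<Longrightarrow> y \<in> L \<Longrightarrow> (\<Sum>a\<in>I. x a * y a) = 0"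
  using Lsd[of x] Lsub by auto

definition surjS :: "'a set \<Rightarrow> bool" where
  "surjS S \<longleftrightarrow> S \<subseteq> I \<and> (\<forall>y\<in>vsp S. \<exists>x\<in>L. \<forall>s\<in>S. x s = y s)"

lemma exS: "\<exists>S. surjS S \<and> (\<forall>x\<in>L. (\<forall>s\<in>S. x s = 0) \<longrightarrow> x = (\<lambda>a. 0))"
proof -
  have e: "surjS {}" unfolding surjS_def using L0 by auto
  have b: "\<forall>S. surjS S \<longrightarrow> card S < Suc (card I)"
    unfolding surjS_def using finI by (simp add: card_mono less_Suc_eq_le)
  have "\<exists>S. surjS S \<and> (\<forall>S'. surjS S' \<longrightarrow> card S' \<le> card S)"
    by (rule ex_has_greatest_nat[of surjS "{}" card "Suc (card I)", OF e b])
  then obtain S where S: "surjS S" and max: "\<forall>S'. surjS S' \<longrightarrow> card S' \<le> card S"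
    by blast
  have SI: "S \<subseteq> I" and finS: "finite S" using S finI unfolding surjS_def by (auto intro: finite_subset)
  have "\<forall>x\<in>L. (\<forall>s\<in>S. x s = 0) \<longrightarrow> x = (\<lambda>a. 0)"
  proof (intro ballI impI, rule ccontr)
    fix x assume x: "x \<in> L" and xS: "\<forall>s\<in>S. x s = 0" and nz: "x \<noteq> (\<lambda>a. 0)"
    then obtain j where j: "x j \<noteq> 0" by auto
    have jI: "j \<in> I" using Lvsp[OF x] j by blast
    have jS: "j \<notin> S" using xS j by auto
    have "surjS (insert j S)"
      unfolding surjS_def
    proof (intro conjI ballI)
      show "insert j S \<subseteq> I" using jI SI by auto
      fix y :: "'a \<Rightarrow> 'k" assume y: "y \<in> vsp (insert j S)"
      define y' where "y' = (\<lambda>a. if a \<in> S then y a else 0)"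
      have "y' \<in> vsp S" unfolding vsp_def y'_def by auto
      then obtain z where z: "z \<in> L" "\<forall>s\<in>S. z s = y' s" using S unfolding surjS_def by blast
      let ?\<alpha> = "(y j - z j) / x j"
      let ?w = "\<lambda>a. z a + ?\<alpha> * x a"
      have wL: "?w \<in> L" by (rule Ladd[OF z(1) Lsm[OF x]])
      have wy: "\<forall>s\<in>insert j S. ?w s = y s"
      proof
        fix s assume s: "s \<in> insert j S"
        show "?w s = y s"
        proof (cases "s = j")
          case True thus ?thesis using j by simp
        next
          case False hence "s \<in> S" using s by simp
          thus ?thesis using z(2) xS unfolding y'_def by simp
        qed
      qed
      show "\<exists>x\<in>L. \<forall>s\<in>insert j S. x s = y s" by (rule bexI[where x = "?w" and P = "\<lambda>x. \<forall>s\<in>insert j S. x s = y s", OF wy wL])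
    qed
    hence "card (insert j S) \<le> card S" using max by blast
    thus False using finS jS by simp
  qed
  with S show ?thesis by blast
qed

theorem lagr_main: "\<exists>k. card I = 2 * k \<and> (odd k \<longrightarrow> (\<exists>z::'k. z * z = -1))"
proof -
  obtain S where S: "surjS S" and injS: "\<forall>x\<in>L. (\<forall>s\<in>S. x s = 0) \<longrightarrow> x = (\<lambda>a. 0)"
    using exS by blast
  have SI: "S \<subseteq> I" and finS: "finite S" using S finI unfolding surjS_def by (auto intro: finite_subset)
  define T where "T = I - S"
  have finT: "finite T" using finI unfolding T_def by simp
  have IST: "I = S \<union> T" "S \<inter> T = {}" using SI unfolding T_def by auto
  define \<delta> :: "'a \<Rightarrow> 'a \<Rightarrow> 'k" where "\<delta> = (\<lambda>s a. if a = s then 1 else 0)"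
  define u where "u = (\<lambda>s. SOME x. x \<in> L \<and> (\<forall>s'\<in>S. x s' = \<delta> s s'))"
  have u: "u s \<in> L \<and> (\<forall>s'\<in>S. u s s' = \<delta> s s')" if "s \<in> S" for s
  proof -
    have "\<delta> s \<in> vsp S" using that unfolding vsp_def \<delta>_def by auto
    hence "\<exists>x. x \<in> L \<and> (\<forall>s'\<in>S. x s' = \<delta> s s')" using S unfolding surjS_def by blast
    thus ?thesis unfolding u_def by (rule someI_ex)
  qed
  have rep: "x = (\<lambda>a. \<Sum>s\<in>S. x s * u s a)" if x: "x \<in> L" for x
  proof -
    let ?r = "\<lambda>a. \<Sum>s\<in>S. x s * u s a"
    have r: "?r \<in> L" using Lsum[OF finS, of "\<lambda>s a. x s * u s a"] Lsm u by blast
    have "?r s' = x s'" if "s' \<in> S" for s'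
    proof -
      have "?r s' = (\<Sum>s\<in>S. x s * \<delta> s s')" using u that by (intro sum.cong) auto
      also have "\<dots> = x s'" using that finS unfolding \<delta>_def by (simp add: if_distrib cong: if_cong)
      finally show ?thesis .
    qed
    hence z: "(\<lambda>a. x a - ?r a) = (\<lambda>a. 0)" using injS Ldiff[OF x r] by simp
    show ?thesis
    proof
      fix a show "x a = ?r a" using fun_cong[OF z, of a] by simp
    qed
  qed
  define X where "X = (\<lambda>t s. u s t)"
  have XTX: "(\<Sum>t\<in>T. X t s * X t s') = - (if s = s' then 1 else 0)" if s: "s \<in> S" and s': "s' \<in> S" for s s'
  proof -
    have "0 = (\<Sum>a\<in>I. u s a * u s' a)" using Lorth u s s' by simp
    also have "\<dots> = (\<Sum>a\<in>S. u s a * u s' a) + (\<Sum>a\<in>T. u s a * u s' a)"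
      using IST finS finT by (simp add: sum.union_disjoint)
    also have "(\<Sum>a\<in>S. u s a * u s' a) = (\<Sum>a\<in>S. \<delta> s a * \<delta> s' a)"
      using u s s' by (intro sum.cong) auto
    also have "\<dots> = (\<Sum>a\<in>S. if a = s then (if s = s' then 1 else 0) else 0)"
      unfolding \<delta>_def by (intro sum.cong) auto
    also have "\<dots> = (if s = s' then 1 else 0)" using s finS by simp
    finally have h: "0 = (if s = s' then 1 else 0) + (\<Sum>a\<in>T. u s a * u s' a)" .
    show ?thesis unfolding X_def using h[symmetric] by (simp only: add_eq_0_iff)
  qed
  have XXT: "(\<Sum>s\<in>S. X t s * X t' s) = - (if t = t' then 1 else 0)" if t: "t \<in> T" and t': "t' \<in> T" for t t'
  proof -
    let ?w = "\<lambda>a. if a = t then 1 else if a \<in> S then - X t a else (0::'k)"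
    have tS: "t \<notin> S" "t \<in> I" using t IST by auto
    have wv: "?w \<in> vsp I" unfolding vsp_def using tS SI by auto
    have "\<forall>y\<in>L. (\<Sum>a\<in>I. ?w a * y a) = 0"
    proof
      fix y assume y: "y \<in> L"
      have "(\<Sum>a\<in>I. ?w a * y a) = (\<Sum>a\<in>S. ?w a * y a) + (\<Sum>a\<in>T. ?w a * y a)"
        using IST finS finT by (simp add: sum.union_disjoint)
      also have "(\<Sum>a\<in>S. ?w a * y a) = (\<Sum>s\<in>S. - (X t s * y s))"
        by (rule sum.cong) (use tS in auto)
      also have "\<dots> = - (\<Sum>s\<in>S. X t s * y s)" by (rule sum_negf)
      also have "(\<Sum>a\<in>T. ?w a * y a) = (\<Sum>a\<in>T. if a = t then y t else 0)"
        using IST by (intro sum.cong) auto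
      also have "\<dots> = y t" using t finT by simp
      also have "y t = (\<Sum>s\<in>S. y s * u s t)" using fun_cong[OF rep[OF y], of t] by simp
      also have "(\<Sum>s\<in>S. y s * u s t) = (\<Sum>s\<in>S. X t s * y s)"
        unfolding X_def by (rule sum.cong) (simp_all add: mult.commute)
      finally show "(\<Sum>a\<in>I. ?w a * y a) = 0" by simp
    qed
    hence wL: "?w \<in> L" using Lsd[OF wv] by simp
    have "?w t' = (\<Sum>s\<in>S. ?w s * u s t')" using fun_cong[OF rep[OF wL], of t'] by simp
    also have "\<dots> = (\<Sum>s\<in>S. - (X t s * X t' s))"
      by (rule sum.cong) (use tS in \<open>auto simp: X_def\<close>)
    also have "\<dots> = - (\<Sum>s\<in>S. X t s * X t' s)" by (rule sum_negf)
    finally have "?w t' = - (\<Sum>s\<in>S. X t s * X t' s)" .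
    moreover have "?w t' = (if t = t' then 1 else 0)" using t' IST by auto
    ultimately have e1: "(if t = t' then 1 else 0) = - (\<Sum>s\<in>S. X t s * X t' s)" by simp
    show ?thesis by (subst e1) simp
  qed
  have c1: "card S \<le> card T" by (rule card_le_orth[OF finS finT XTX])
  have c2: "card T \<le> card S"
    by (rule card_le_orth[OF finT finS, of "\<lambda>s t. X t s"]) (simp add: XXT)
  have cST: "card T = card S" using c1 c2 by simp
  have cI: "card I = 2 * card S" using IST finS finT cST by (simp add: card_Un_disjoint)
  have "odd (card S) \<longrightarrow> (\<exists>z::'k. z * z = -1)"
  proof
    assume "odd (card S)"
    moreover obtain z :: 'k where "z * z = (-1) ^ card S" using det_sq[OF finS finT cST XTX] by blast
    ultimately have "z * z = -1" by (simp add: power_minus_odd)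
    thus "\<exists>z::'k. z * z = -1" by blast
  qed
  with cI show ?thesis by blast
qed

end

locale subgrp =
  fixes P :: "'g::{group_add,finite} set"
  assumes P0: "0 \<in> P" and Padd: "\<And>x y. x \<in> P \<Longrightarrow> y \<in> P \<Longrightarrow> x + y \<in> P"
    and Pneg: "\<And>x. x \<in> P \<Longrightarrow> - x \<in> P"
begin

definition lcos :: "'g \<Rightarrow> 'g set" where "lcos h = {g. - g + h \<in> P}"

lemma lcos_self: "h \<in> lcos h"
  unfolding lcos_def using P0 by simp

lemma lcos_eq: assumes "g \<in> lcos h" shows "lcos g = lcos h"
proof -
  have gh: "- g + h \<in> P" using assms unfolding lcos_def by simp
  have "(- x + g \<in> P) \<longleftrightarrow> (- x + h \<in> P)" for x
  proof
    assume "- x + g \<in> P"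
    hence "(- x + g) + (- g + h) \<in> P" using gh Padd by blast
    thus "- x + h \<in> P" by (simp add: add.assoc)
  next
    assume "- x + h \<in> P"
    hence "(- x + h) + - (- g + h) \<in> P" using gh Padd Pneg by blast
    thus "- x + g \<in> P" by (simp add: add.assoc minus_add)
  qed
  thus ?thesis unfolding lcos_def by auto
qed

lemma lcos_img: "lcos h = (\<lambda>k. h + k) ` P"
proof
  show "lcos h \<subseteq> (\<lambda>k. h + k) ` P"
  proof
    fix x assume "x \<in> lcos h"
    hence "- (- x + h) \<in> P" unfolding lcos_def using Pneg by blast
    hence "- h + x \<in> P" by (simp add: minus_add)
    moreover have "x = h + (- h + x)" by (simp add: add.assoc[symmetric])
    ultimately show "x \<in> (\<lambda>k. h + k) ` P" by blast
  qed
  show "(\<lambda>k. h + k) ` P \<subseteq> lcos h"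
  proof
    fix x assume "x \<in> (\<lambda>k. h + k) ` P"
    then obtain k where k: "k \<in> P" "x = h + k" by blast
    have "- x + h = - k" using k(2) by (simp add: minus_add add.assoc)
    thus "x \<in> lcos h" unfolding lcos_def using Pneg[OF k(1)] by simp
  qed
qed

lemma card_lcos: "card (lcos h) = card P"
  unfolding lcos_img by (rule card_image) (simp add: inj_on_def)

lemma lcos_disj: "A \<in> range lcos \<Longrightarrow> B \<in> range lcos \<Longrightarrow> A \<noteq> B \<Longrightarrow> A \<inter> B = {}"
  using lcos_eq by blast

lemma Union_lcos: "\<Union> (range lcos) = UNIV"
  using lcos_self by blast

lemma card_part: "card P * card (range lcos) = card (UNIV::'g set)"
proof -
  have "card P * card (range lcos) = card (\<Union> (range lcos))"
    by (rule card_partition) (auto simp: card_lcos lcos_disj)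
  thus ?thesis using Union_lcos by simp
qed

lemma sum_lcos: "(\<Sum>g\<in>UNIV. f g) = (\<Sum>Q\<in>range lcos. \<Sum>g\<in>Q. f g)"
proof -
  have "(\<Sum>g\<in>\<Union> (range lcos). f g) = (\<Sum>Q\<in>range lcos. \<Sum>g\<in>Q. f g)"
    using sum.Union_disjoint[of "range lcos" f] lcos_disj by (simp add: o_def)
  thus ?thesis using Union_lcos by simp
qed

end

lemma ga_form_sym: "ga_form l v w = ga_form l w v"
  unfolding ga_form_def by (simp add: mult.commute)

lemma scal_in:
  fixes C :: "(nat \<Rightarrow> 'g::{group_add,finite} \<Rightarrow> 'k::field) set"
  assumes "quasi_G_code l C" "v \<in> C"
  shows "(\<lambda>i g. c * v i g) \<in> C"
proof -
  have "ga_rmult v (\<lambda>g. if g = 0 then c else 0) = (\<lambda>i g. c * v i g)"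
  proof (intro ext)
    fix i h
    have "ga_rmult v (\<lambda>g. if g = 0 then c else 0) i h = (\<Sum>g\<in>UNIV. if g = h then v i g * c else 0)"
      unfolding ga_rmult_def ga_mult_def
    proof (intro sum.cong refl)
      fix g :: 'g
      have "(- g + h = 0) = (g = h)"
        by (metis add.left_inverse add_minus_cancel neg_eq_iff_add_eq_0)
      thus "v i g * (if - g + h = 0 then c else 0) = (if g = h then v i g * c else 0)" by simp
    qed
    also have "\<dots> = c * v i h" by (simp add: mult.commute)
    finally show "ga_rmult v (\<lambda>g. if g = 0 then c else 0) i h = c * v i h" .
  qed
  thus ?thesis using assms unfolding quasi_G_code_def by metis
qed

theorem reduce:
  fixes C :: "(nat \<Rightarrow> 'g::{group_add,finite} \<Rightarrow> 'k::{field,finite}) set" and P :: "'g set"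
  assumes P: "subgrp P" and Pk: "(of_nat (card P) :: 'k) \<noteq> 0"
    and qc: "quasi_G_code l C" and sd: "ga_dual l C = C"
  shows "\<exists>k. l * card (range (subgrp.lcos P)) = 2 * k \<and> (odd k \<longrightarrow> (\<exists>z::'k. z * z = -1))"
proof -
  interpret subgrp P by (rule P)
  let ?R = "range lcos"
  define I where "I = {..<l} \<times> ?R"
  define \<sigma> :: "(nat \<Rightarrow> 'g \<Rightarrow> 'k) \<Rightarrow> nat \<times> 'g set \<Rightarrow> 'k" where
    "\<sigma> = (\<lambda>v (i, Q). if i < l \<and> Q \<in> ?R then (\<Sum>x\<in>Q. v i x) else 0)"
  define \<iota> :: "(nat \<times> 'g set \<Rightarrow> 'k) \<Rightarrow> nat \<Rightarrow> 'g \<Rightarrow> 'k" where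
    "\<iota> = (\<lambda>u i g. if i < l then u (i, lcos g) else 0)"
  define cP :: 'k where "cP = of_nat (card P)"
  define L where "L = \<sigma> ` C"
  have Csp: "C \<subseteq> ga_space l" and C0: "(\<lambda>i g. 0) \<in> C"
    and Cadd: "\<And>v w. v \<in> C \<Longrightarrow> w \<in> C \<Longrightarrow> (\<lambda>i g. v i g + w i g) \<in> C"
    and Crm: "\<And>v a. v \<in> C \<Longrightarrow> ga_rmult v a \<in> C"
    using qc unfolding quasi_G_code_def by auto
  have Corth: "\<And>v w. v \<in> C \<Longrightarrow> w \<in> C \<Longrightarrow> ga_form l v w = 0"
    using sd unfolding ga_dual_def by blast
  have finR: "finite ?R" by simp
  have finI: "finite I" unfolding I_def by simp
  have cardI: "card I = l * card ?R" unfolding I_def by (simp add: card_cartesian_product)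
  have \<sigma>v: "\<sigma> v \<in> vsp I" for v unfolding vsp_def I_def \<sigma>_def by auto
  have \<iota>sp: "\<iota> u \<in> ga_space l" for u unfolding ga_space_def \<iota>_def by auto
  have form: "ga_form l v (\<iota> u) = (\<Sum>a\<in>I. \<sigma> v a * u a)" for v u
  proof -
    have "ga_form l v (\<iota> u) = (\<Sum>i<l. \<Sum>g\<in>UNIV. v i g * u (i, lcos g))"
      unfolding ga_form_def \<iota>_def by simp
    also have "\<dots> = (\<Sum>i<l. \<Sum>Q\<in>?R. \<Sum>g\<in>Q. v i g * u (i, lcos g))"
      by (simp add: sum_lcos)
    also have "\<dots> = (\<Sum>i<l. \<Sum>Q\<in>?R. \<sigma> v (i, Q) * u (i, Q))"
    proof (intro sum.cong refl)
      fix i Q assume i: "i \<in> {..<l}" and Q: "Q \<in> ?R"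
      have "(\<Sum>g\<in>Q. v i g * u (i, lcos g)) = (\<Sum>g\<in>Q. v i g * u (i, Q))"
        using Q lcos_eq by (intro sum.cong refl) auto
      also have "\<dots> = \<sigma> v (i, Q) * u (i, Q)" using i Q unfolding \<sigma>_def by (simp add: sum_distrib_right)
      finally show "(\<Sum>g\<in>Q. v i g * u (i, lcos g)) = \<sigma> v (i, Q) * u (i, Q)" .
    qed
    also have "\<dots> = (\<Sum>a\<in>I. \<sigma> v a * u a)"
      unfolding I_def by (simp add: sum.cartesian_product)
    finally show ?thesis .
  qed
  have \<sigma>\<iota>: "\<sigma> (\<iota> u) = (\<lambda>a. cP * u a)" if u: "u \<in> vsp I" for u
  proof
    fix a :: "nat \<times> 'g set"
    obtain i Q where a: "a = (i, Q)" by force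
    show "\<sigma> (\<iota> u) a = cP * u a"
    proof (cases "i < l \<and> Q \<in> ?R")
      case True
      have "\<sigma> (\<iota> u) a = (\<Sum>x\<in>Q. u (i, lcos x))" using True unfolding a \<sigma>_def \<iota>_def by simp
      also have "\<dots> = (\<Sum>x\<in>Q. u (i, Q))" using True lcos_eq by (intro sum.cong refl) auto
      also have "\<dots> = of_nat (card Q) * u (i, Q)" by simp
      also have "card Q = card P" using True card_lcos by auto
      finally show ?thesis unfolding a cP_def .
    next
      case False
      hence "a \<notin> I" unfolding a I_def by auto
      hence "u a = 0" using u unfolding vsp_def by blast
      have "\<sigma> (\<iota> u) a = 0" using False unfolding a \<sigma>_def by auto
      thus ?thesis using \<open>u a = 0\<close> by simp
    qed
  qed
  have \<iota>\<sigma>: "\<iota> (\<sigma> w) = ga_rmult w (\<lambda>g. if g \<in> P then 1 else 0)" if w: "w \<in> ga_space l" for w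
  proof (intro ext)
    fix i h
    have r: "ga_rmult w (\<lambda>g. if g \<in> P then 1 else 0) i h = (\<Sum>x\<in>lcos h. w i x)"
    proof -
      have "ga_rmult w (\<lambda>g. if g \<in> P then 1 else 0) i h = (\<Sum>x\<in>UNIV. if x \<in> lcos h then w i x else 0)"
        unfolding ga_rmult_def ga_mult_def lcos_def by (intro sum.cong refl) auto
      also have "\<dots> = (\<Sum>x\<in>lcos h. w i x)" by (simp add: sum.If_cases)
      finally show ?thesis .
    qed
    show "\<iota> (\<sigma> w) i h = ga_rmult w (\<lambda>g. if g \<in> P then 1 else 0) i h"
    proof (cases "i < l")
      case True thus ?thesis unfolding r \<iota>_def \<sigma>_def by simp
    next
      case False
      hence "\<And>x. w i x = 0" using w unfolding ga_space_def by auto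
      thus ?thesis unfolding r \<iota>_def using False by simp
    qed
  qed
  have inL: "\<And>v x. v \<in> C \<Longrightarrow> x = \<sigma> v \<Longrightarrow> x \<in> L" unfolding L_def by blast
  interpret lagr I L
  proof
    show "finite I" by (rule finI)
    show "L \<subseteq> vsp I" unfolding L_def using \<sigma>v by auto
    have "\<sigma> (\<lambda>i g. 0) = (\<lambda>a. 0)" unfolding \<sigma>_def by auto
    thus "(\<lambda>a. 0) \<in> L" using inL[OF C0] by simp
    fix x y assume x: "x \<in> L" and y: "y \<in> L"
    then obtain v w where v: "v \<in> C" "x = \<sigma> v" and w: "w \<in> C" "y = \<sigma> w" unfolding L_def by blast
    have "\<sigma> (\<lambda>i g. v i g + w i g) = (\<lambda>a. x a + y a)"
    proof
      fix a :: "nat \<times> 'g set"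
      obtain i Q where a: "a = (i, Q)" by force
      show "\<sigma> (\<lambda>i g. v i g + w i g) a = x a + y a"
        unfolding a v(2) w(2) \<sigma>_def by (simp add: sum.distrib)
    qed
    thus "(\<lambda>a. x a + y a) \<in> L" using inL[OF Cadd[OF v(1) w(1)]] by simp
  next
    fix x and c :: 'k assume x: "x \<in> L"
    then obtain v where v: "v \<in> C" "x = \<sigma> v" unfolding L_def by blast
    have "\<sigma> (\<lambda>i g. c * v i g) = (\<lambda>a. c * x a)"
    proof
      fix a :: "nat \<times> 'g set"
      obtain i Q where a: "a = (i, Q)" by force
      show "\<sigma> (\<lambda>i g. c * v i g) a = c * x a"
        unfolding a v(2) \<sigma>_def by (simp add: sum_distrib_left)
    qed
    thus "(\<lambda>a. c * x a) \<in> L" by (rule inL[OF scal_in[OF qc v(1), of c] sym])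
  next
    fix x :: "nat \<times> 'g set \<Rightarrow> 'k" assume xv: "x \<in> vsp I"
    show "x \<in> L \<longleftrightarrow> (\<forall>y\<in>L. (\<Sum>a\<in>I. x a * y a) = 0)"
    proof
      assume "x \<in> L"
      then obtain v where v: "v \<in> C" "x = \<sigma> v" unfolding L_def by blast
      show "\<forall>y\<in>L. (\<Sum>a\<in>I. x a * y a) = 0"
      proof
        fix y assume "y \<in> L"
        then obtain w where w: "w \<in> C" "y = \<sigma> w" unfolding L_def by blast
        have "(\<Sum>a\<in>I. x a * y a) = ga_form l v (\<iota> (\<sigma> w))" unfolding form v w ..
        also have "\<dots> = ga_form l v (ga_rmult w (\<lambda>g. if g \<in> P then 1 else 0))"
          using \<iota>\<sigma> Csp w(1) by auto
        also have "\<dots> = 0" using Corth[OF v(1) Crm[OF w(1)]] .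
        finally show "(\<Sum>a\<in>I. x a * y a) = 0" .
      qed
    next
      assume orth: "\<forall>y\<in>L. (\<Sum>a\<in>I. x a * y a) = 0"
      have "\<iota> x \<in> ga_dual l C"
        unfolding ga_dual_def
      proof (intro CollectI conjI ballI)
        show "\<iota> x \<in> ga_space l" by (rule \<iota>sp)
        fix c assume c: "c \<in> C"
        have "ga_form l (\<iota> x) c = ga_form l c (\<iota> x)" by (rule ga_form_sym)
        also have "\<dots> = (\<Sum>a\<in>I. \<sigma> c a * x a)" by (rule form)
        also have "\<dots> = (\<Sum>a\<in>I. x a * \<sigma> c a)" by (simp add: mult.commute)
        also have "\<dots> = 0" using orth c unfolding L_def by blast
        finally show "ga_form l (\<iota> x) c = 0" .
      qed
      hence ixC: "\<iota> x \<in> C" using sd by simp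
      have "(\<lambda>i g. inverse cP * \<iota> x i g) \<in> C" by (rule scal_in[OF qc ixC])
      moreover have "\<sigma> (\<lambda>i g. inverse cP * \<iota> x i g) = x"
      proof -
        have "\<sigma> (\<lambda>i g. inverse cP * \<iota> x i g) = (\<lambda>a. inverse cP * \<sigma> (\<iota> x) a)"
        proof
          fix a :: "nat \<times> 'g set"
          obtain i Q where a: "a = (i, Q)" by force
          show "\<sigma> (\<lambda>i g. inverse cP * \<iota> x i g) a = inverse cP * \<sigma> (\<iota> x) a"
            unfolding a \<sigma>_def by (simp add: sum_distrib_left)
        qed
        also have "\<dots> = x" using \<sigma>\<iota>[OF xv] Pk unfolding cP_def by auto
        finally show ?thesis .
      qed
      ultimately show "x \<in> L" by (intro inL) auto
    qed
  qed
  obtain k where "card I = 2 * k" "odd k \<longrightarrow> (\<exists>z::'k. z * z = -1)" using lagr_main by blast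
  thus ?thesis using cardI by auto
qed

lemma sum2: "(\<Sum>t<2. f t) = f 0 + f (1::nat)"
  by (simp add: numeral_2_eq_2)

lemma sum4: "(\<Sum>t<4. f t) = f 0 + f 1 + f 2 + f (3::nat)"
proof -
  have "{..<4::nat} = {0,1,2,3}" by auto
  thus ?thesis by (simp add: add.assoc)
qed

lemma blkB2:
  fixes i :: "'k::field"
  assumes i: "i * i = -1"
  shows "blkB 2 {x. (\<forall>t\<ge>2. x t = 0) \<and> x 1 = i * x 0}"
proof (unfold_locales)
  fix x :: "nat \<Rightarrow> 'k" assume x: "\<forall>t\<ge>2. x t = 0"
  let ?B = "{x. (\<forall>t\<ge>2. x t = 0) \<and> x 1 = i * x 0}"
  show "(\<forall>b\<in>?B. (\<Sum>t<2. x t * b t) = 0) \<longleftrightarrow> x \<in> ?B"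
  proof
    assume h: "\<forall>b\<in>?B. (\<Sum>t<2. x t * b t) = 0"
    let ?b = "\<lambda>t::nat. if t = 0 then 1 else if t = 1 then i else 0"
    have "?b \<in> ?B" by simp
    hence "x 0 * 1 + x 1 * i = 0" using h[rule_format, of ?b] by (simp add: sum2)
    hence "x 0 = - (x 1 * i)" by (simp add: eq_neg_iff_add_eq_0)
    hence "i * x 0 = - (x 1 * (i * i))" by (simp add: algebra_simps)
    hence "x 1 = i * x 0" using i by simp
    thus "x \<in> ?B" using x by simp
  next
    assume xB: "x \<in> ?B"
    show "\<forall>b\<in>?B. (\<Sum>t<2. x t * b t) = 0"
    proof
      fix b :: "nat \<Rightarrow> 'k" assume bB: "b \<in> ?B"
      have "x 1 * b 1 = (i * i) * (x 0 * b 0)" using xB bB by (simp add: algebra_simps)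
      hence "x 0 * b 0 + x 1 * b 1 = 0" using i by simp
      thus "(\<Sum>t<2. x t * b t) = 0" by (simp add: sum2)
    qed
  qed
qed (auto simp: algebra_simps)

lemma blkB4:
  fixes a b :: "'k::field"
  assumes ab: "a * a + b * b = -1"
  shows "blkB 4 {x. (\<forall>t\<ge>4. x t = 0) \<and> x 2 = a * x 0 + b * x 1 \<and> x 3 = - b * x 0 + a * x 1}"
proof (unfold_locales)
  fix x :: "nat \<Rightarrow> 'k" assume x: "\<forall>t\<ge>4. x t = 0"
  let ?B = "{x. (\<forall>t\<ge>4. x t = 0) \<and> x 2 = a * x 0 + b * x 1 \<and> x 3 = - b * x 0 + a * x 1}"
  show "(\<forall>y\<in>?B. (\<Sum>t<4. x t * y t) = 0) \<longleftrightarrow> x \<in> ?B"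
  proof
    assume h: "\<forall>y\<in>?B. (\<Sum>t<4. x t * y t) = 0"
    let ?b1 = "\<lambda>t::nat. if t = 0 then 1 else if t = 2 then a else if t = 3 then - b else 0"
    let ?b2 = "\<lambda>t::nat. if t = 1 then 1 else if t = 2 then b else if t = 3 then a else 0"
    have "?b1 \<in> ?B" "?b2 \<in> ?B" by auto
    hence e1: "x 0 + x 2 * a + x 3 * (- b) = 0" and e2: "x 1 + x 2 * b + x 3 * a = 0"
      using h[rule_format, of ?b1] h[rule_format, of ?b2] by (simp_all add: sum4)
    have "x 0 + (x 2 * a + x 3 * - b) = 0" using e1 by (simp only: add.assoc)
    hence x0: "x 0 = - (x 2 * a + x 3 * - b)" by (simp only: eq_neg_iff_add_eq_0)
    have "x 1 + (x 2 * b + x 3 * a) = 0" using e2 by (simp only: add.assoc)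
    hence x1: "x 1 = - (x 2 * b + x 3 * a)" by (simp only: eq_neg_iff_add_eq_0)
    have "a * x 0 + b * x 1 = - ((a * a + b * b) * x 2)" unfolding x0 x1 by (simp add: algebra_simps)
    hence "x 2 = a * x 0 + b * x 1" using ab by simp
    moreover have "- b * x 0 + a * x 1 = - ((a * a + b * b) * x 3)" unfolding x0 x1 by (simp add: algebra_simps)
    hence "x 3 = - b * x 0 + a * x 1" using ab by simp
    ultimately show "x \<in> ?B" using x by simp
  next
    assume xB: "x \<in> ?B"
    show "\<forall>y\<in>?B. (\<Sum>t<4. x t * y t) = 0"
    proof
      fix y :: "nat \<Rightarrow> 'k" assume yB: "y \<in> ?B"
      have "x 0 * y 0 + x 1 * y 1 + x 2 * y 2 + x 3 * y 3 = 0"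
      proof -
        have "x 0 * y 0 + x 1 * y 1 + x 2 * y 2 + x 3 * y 3 =
              x 0 * y 0 + x 1 * y 1 + (a * x 0 + b * x 1) * (a * y 0 + b * y 1)
              + (- b * x 0 + a * x 1) * (- b * y 0 + a * y 1)" using xB yB by simp
        also have "\<dots> = (1 + (a * a + b * b)) * (x 0 * y 0 + x 1 * y 1)" by (simp add: algebra_simps)
        also have "\<dots> = 0" using ab by simp
        finally show ?thesis .
      qed
      thus "(\<Sum>t<4. x t * y t) = 0" by (simp add: sum4)
    qed
  qed
next
  fix x y :: "nat \<Rightarrow> 'k"
  assume x: "x \<in> {x. (\<forall>t\<ge>4. x t = 0) \<and> x 2 = a * x 0 + b * x 1 \<and> x 3 = - b * x 0 + a * x 1}"
    and y: "y \<in> {x. (\<forall>t\<ge>4. x t = 0) \<and> x 2 = a * x 0 + b * x 1 \<and> x 3 = - b * x 0 + a * x 1}"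
  have x2: "x 2 = a * x 0 + b * x 1" and x3: "x 3 = - b * x 0 + a * x 1" using x by auto
  have y2: "y 2 = a * y 0 + b * y 1" and y3: "y 3 = - b * y 0 + a * y 1" using y by auto
  have "x 2 + y 2 = a * (x 0 + y 0) + b * (x 1 + y 1)" unfolding x2 y2 by (simp add: algebra_simps)
  moreover have "x 3 + y 3 = - b * (x 0 + y 0) + a * (x 1 + y 1)" unfolding x3 y3 by (simp add: algebra_simps)
  ultimately show "(\<lambda>t. x t + y t) \<in> {x. (\<forall>t\<ge>4. x t = 0) \<and> x 2 = a * x 0 + b * x 1 \<and> x 3 = - b * x 0 + a * x 1}"
    using x y by simp
next
  fix x :: "nat \<Rightarrow> 'k" and c :: 'k
  assume x: "x \<in> {x. (\<forall>t\<ge>4. x t = 0) \<and> x 2 = a * x 0 + b * x 1 \<and> x 3 = - b * x 0 + a * x 1}"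
  have x2: "x 2 = a * x 0 + b * x 1" and x3: "x 3 = - b * x 0 + a * x 1" using x by auto
  have "c * x 2 = a * (c * x 0) + b * (c * x 1)" unfolding x2 by (simp add: algebra_simps)
  moreover have "c * x 3 = - b * (c * x 0) + a * (c * x 1)" unfolding x3 by (simp add: algebra_simps)
  ultimately show "(\<lambda>t. c * x t) \<in> {x. (\<forall>t\<ge>4. x t = 0) \<and> x 2 = a * x 0 + b * x 1 \<and> x 3 = - b * x 0 + a * x 1}"
    using x by simp
qed auto

lemma sum_shift: "(\<Sum>g\<in>UNIV. F (t + g)) = (\<Sum>g\<in>(UNIV::'g::{group_add,finite} set). F g)"
proof -
  have s: "(+) t ` (UNIV::'g set) = UNIV"
  proof -
    have "x = t + (- t + x)" for x :: 'g by (simp add: add.assoc[symmetric])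
    thus ?thesis by blast
  qed
  have inj: "inj ((+) t)" by (simp add: inj_on_def)
  have "(\<Sum>g\<in>(+) t ` UNIV. F g) = (\<Sum>g\<in>UNIV. (F \<circ> (+) t) g)" by (rule sum.reindex[OF inj])
  thus ?thesis using s by simp
qed

lemma sum_pair_zero:
  fixes h :: "'a \<Rightarrow> 'k::field"
  assumes "finite A" "\<forall>x\<in>A. f x \<in> A \<and> f (f x) = x \<and> f x \<noteq> x" "\<forall>x\<in>A. h (f x) = h x"
    and two: "(2::'k) = 0"
  shows "(\<Sum>x\<in>A. h x) = 0"
  using assms(1,2,3)
proof (induction "card A" arbitrary: A rule: less_induct)
  case less
  show ?case
  proof (cases "A = {}")
    case True then show ?thesis by simp
  next
    case False
    then obtain x where x: "x \<in> A" by blast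
    let ?A' = "A - {x, f x}"
    have fx: "f x \<in> A" "f x \<noteq> x" using less.prems x by auto
    have inv: "\<forall>y\<in>?A'. f y \<in> ?A' \<and> f (f y) = y \<and> f y \<noteq> y"
    proof
      fix y assume y: "y \<in> ?A'"
      have a: "f y \<in> A" "f (f y) = y" "f y \<noteq> y" using less.prems(2) y by auto
      have b: "f y \<noteq> x"
      proof
        assume "f y = x" hence "f x = y" using a(2) by simp
        thus False using y by simp
      qed
      have c: "f y \<noteq> f x"
      proof
        assume "f y = f x" hence "f (f y) = f (f x)" by simp
        hence "y = x" using a(2) less.prems(2) x by simp
        thus False using y by simp
      qed
      show "f y \<in> ?A' \<and> f (f y) = y \<and> f y \<noteq> y" using a b c by simp
    qed
    have sub: "{x, f x} \<subseteq> A" using x fx by auto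
    have lt: "card ?A' < card A"
      using less.prems(1) x by (intro psubset_card_mono) auto
    have IH: "(\<Sum>y\<in>?A'. h y) = 0" using less.hyps[OF lt less.prems(1)[THEN finite_subset[rotated]] inv] less.prems(3)
      by auto
    have "(\<Sum>y\<in>A. h y) = (\<Sum>y\<in>{x, f x}. h y) + (\<Sum>y\<in>?A'. h y)"
      using less.prems(1) sub by (metis sum.subset_diff add.commute)
    also have "(\<Sum>y\<in>{x, f x}. h y) = h x + h x" using fx less.prems(3) x by simp
    also have "h x + h x = 2 * h x" by simp
    finally show ?thesis using IH two by simp
  qed
qed

definition gcode :: "nat \<Rightarrow> 'g \<Rightarrow> (nat \<Rightarrow> 'g::{group_add,finite} \<Rightarrow> 'k::field) set" where
  "gcode l t = {v \<in> ga_space l. \<forall>i g. v i (t + g) = v i g}"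

lemma gcode_ok:
  fixes t :: "'g::{group_add,finite}"
  assumes t0: "t \<noteq> 0" and tt: "t + t = 0" and two: "(2::'k::field) = 0"
  shows "quasi_G_code l (gcode l t :: (nat \<Rightarrow> 'g \<Rightarrow> 'k) set)
    \<and> ga_dual l (gcode l t :: (nat \<Rightarrow> 'g \<Rightarrow> 'k) set) = gcode l t"
proof -
  let ?C = "gcode l t :: (nat \<Rightarrow> 'g \<Rightarrow> 'k) set"
  have mt: "- t = t" using tt by (simp add: minus_unique)
  have tg: "t + (t + g) = g" for g by (simp add: add.assoc[symmetric] tt)
  have tgne: "t + g \<noteq> g" for g
  proof
    assume "t + g = g" hence "t + g = 0 + g" by simp
    hence "t = 0" by (simp only: add_right_cancel)
    thus False using t0 by simp
  qed
  have neg: "- x = x" for x :: 'k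
  proof -
    have "x + x = 2 * x" by simp
    hence "x + x = 0" using two by simp
    thus ?thesis by (simp add: add_eq_0_iff)
  qed
  have q: "quasi_G_code l ?C"
    unfolding quasi_G_code_def
  proof (intro conjI ballI allI)
    show "?C \<subseteq> ga_space l" unfolding gcode_def by auto
    show "(\<lambda>i g. 0) \<in> ?C" unfolding gcode_def ga_space_def by simp
    fix v w assume "v \<in> ?C" "w \<in> ?C"
    thus "(\<lambda>i g. v i g + w i g) \<in> ?C" unfolding gcode_def ga_space_def by auto
  next
    fix v a assume v: "v \<in> ?C"
    have "ga_rmult v a i (t + h) = ga_rmult v a i h" for i h
    proof -
      have "ga_rmult v a i (t + h) = (\<Sum>g\<in>UNIV. v i (t + g) * a (- (t + g) + (t + h)))"
        unfolding ga_rmult_def ga_mult_def by (rule sum_shift[symmetric])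
      also have "\<dots> = (\<Sum>g\<in>UNIV. v i g * a (- g + h))"
      proof (intro sum.cong refl)
        fix g
        have "- (t + g) + (t + h) = - g + h" by (simp only: minus_add add.assoc minus_add_cancel)
        moreover have "v i (t + g) = v i g" using v unfolding gcode_def by auto
        ultimately show "v i (t + g) * a (- (t + g) + (t + h)) = v i g * a (- g + h)" by simp
      qed
      finally show ?thesis unfolding ga_rmult_def ga_mult_def .
    qed
    moreover have "ga_rmult v a \<in> ga_space l"
      using v unfolding gcode_def ga_space_def ga_rmult_def ga_mult_def by auto
    ultimately show "ga_rmult v a \<in> ?C" unfolding gcode_def by auto
  qed
  have "ga_dual l ?C = ?C"
  proof
    show "?C \<subseteq> ga_dual l ?C"
    proof
      fix v assume v: "v \<in> ?C"
      have "ga_form l v c = 0" if c: "c \<in> ?C" for c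
      proof -
        have "(\<Sum>g\<in>UNIV. v i g * c i g) = 0" for i
          by (rule sum_pair_zero[where f = "\<lambda>g. t + g"]) (use v c tg tgne two in \<open>auto simp: gcode_def\<close>)
        thus ?thesis unfolding ga_form_def by simp
      qed
      thus "v \<in> ga_dual l ?C" using v unfolding ga_dual_def gcode_def by auto
    qed
  next
    show "ga_dual l ?C \<subseteq> ?C"
    proof
      fix v assume v: "v \<in> ga_dual l ?C"
      have vs: "v \<in> ga_space l" using v unfolding ga_dual_def by auto
      have "v i (t + g) = v i g" for i g
      proof (cases "i < l")
        case False thus ?thesis using vs unfolding ga_space_def by auto
      next
        case True
        let ?c = "\<lambda>i' g'. if i' = i \<and> (g' = g \<or> g' = t + g) then 1 else (0::'k)"
        have eqv: "(t + g' = g \<or> t + g' = t + g) = (g' = g \<or> g' = t + g)" for g'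
        proof -
          have "(t + g' = g) = (g' = t + g)" using tg by (metis)
          thus ?thesis by auto
        qed
        have cC: "?c \<in> ?C" unfolding gcode_def
        proof (intro CollectI conjI allI)
          show "?c \<in> ga_space l" unfolding ga_space_def using True by auto
          fix i' g' show "?c i' (t + g') = ?c i' g'" using eqv[of g'] by simp
        qed
        have "ga_form l v ?c = (\<Sum>ia<l. if ia = i then (\<Sum>g'\<in>UNIV. if g' \<in> {g, t + g} then v i g' else 0) else 0)"
          unfolding ga_form_def
        proof (intro sum.cong refl)
          fix ia
          show "(\<Sum>g'\<in>UNIV. v ia g' * ?c ia g') = (if ia = i then (\<Sum>g'\<in>UNIV. if g' \<in> {g, t + g} then v i g' else 0) else 0)"
          proof (cases "ia = i")
            case True
            have "(\<Sum>g'\<in>UNIV. v ia g' * ?c ia g') = (\<Sum>g'\<in>UNIV. if g' \<in> {g, t + g} then v i g' else 0)"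
              using True by (intro sum.cong refl) simp
            thus ?thesis using True by simp
          next
            case False thus ?thesis by simp
          qed
        qed
        also have "\<dots> = (\<Sum>g'\<in>UNIV. if g' \<in> {g, t + g} then v i g' else 0)" using True by simp
        also have "\<dots> = (\<Sum>g'\<in>{g, t + g}. v i g')"
        proof -
          have sets: "{g'. g' = g \<or> g' = t + g} = {g, t + g}" by auto
          show ?thesis by (simp add: sum.If_cases sets)
        qed
        also have "\<dots> = v i g + v i (t + g)" using tgne[of g] by simp
        finally have "v i g + v i (t + g) = 0" using v cC unfolding ga_dual_def by auto
        hence "v i (t + g) = - v i g" by (simp add: add_eq_0_iff)
        thus ?thesis using neg by simp
      qed
      thus "v \<in> ?C" using vs unfolding gcode_def by auto
    qed
  qed
  with q show ?thesis by simp
qed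

lemma even_group_inv:
  assumes "even (card (UNIV::'g::{group_add,finite} set))"
  shows "\<exists>t::'g. t \<noteq> 0 \<and> t + t = 0"
proof (rule ccontr)
  assume na: "\<not> ?thesis"
  have "even (card (UNIV - {0::'g}))"
  proof (rule invol_even[of _ "\<lambda>x. - x"])
    show "\<forall>x\<in>UNIV - {0::'g}. - x \<in> UNIV - {0} \<and> - (- x) = x \<and> - x \<noteq> x"
    proof
      fix x :: 'g assume "x \<in> UNIV - {0}"
      hence x: "x \<noteq> 0" by simp
      have "- x \<noteq> x"
      proof
        assume e: "- x = x"
        have "x + x = x + - x" using e by simp
        hence "x + x = 0" by simp
        thus False using na x by blast
      qed
      thus "- x \<in> UNIV - {0} \<and> - (- x) = x \<and> - x \<noteq> x" using x by simp
    qed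
  qed simp
  moreover have "card (UNIV - {0::'g}) = card (UNIV::'g set) - 1" by (simp add: card_Diff_singleton)
  moreover have "card (UNIV::'g set) \<ge> 1" by (simp add: Suc_leI finite_UNIV_card_ge_0)
  ultimately show False using assms by presburger
qed

lemma pow2_odd: "(n::nat) > 0 \<Longrightarrow> \<exists>a m. n = 2 ^ a * m \<and> odd m"
proof (induction n rule: less_induct)
  case (less n)
  show ?case
  proof (cases "odd n")
    case True then show ?thesis by (intro exI[of _ 0] exI[of _ n]) simp
  next
    case False
    then obtain n' where n': "n = 2 * n'" by blast
    hence "n' < n" "n' > 0" using less.prems by auto
    then obtain a m where "n' = 2 ^ a * m" "odd m" using less.IH by blast
    hence "n = 2 ^ Suc a * m \<and> odd m" using n' by simp
    thus ?thesis by blast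
  qed
qed

definition grp_of :: "'g::group_add monoid" where
  "grp_of = \<lparr>carrier = UNIV, monoid.mult = (+), one = 0\<rparr>"

lemma grp_of_group: "group (grp_of :: 'g::group_add monoid)"
proof (rule groupI)
  fix x :: 'g
  show "\<exists>y\<in>carrier grp_of. y \<otimes>\<^bsub>grp_of\<^esub> x = \<one>\<^bsub>grp_of\<^esub>"
    by (rule bexI[of _ "- x"]) (simp_all add: grp_of_def)
qed (simp_all add: grp_of_def add.assoc)

lemma sylow2:
  "\<exists>P::'g::{group_add,finite} set. subgrp P \<and>
     (\<exists>a m. card P = 2 ^ a \<and> card (UNIV::'g set) = 2 ^ a * m \<and> odd m)"
proof -
  let ?G = "grp_of :: 'g monoid"
  have n0: "card (UNIV::'g set) > 0" by (simp add: finite_UNIV_card_ge_0)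
  obtain a m where am: "card (UNIV::'g set) = 2 ^ a * m" "odd m" using pow2_odd[OF n0] by blast
  have grp: "group ?G" by (rule grp_of_group)
  have "order ?G = 2 ^ a * m" using am unfolding order_def grp_of_def by simp
  moreover have "finite (carrier ?G)" unfolding grp_of_def by simp
  ultimately obtain H where H: "subgroup H ?G" "card H = 2 ^ a"
    using sylow_thm[of 2 ?G a m] grp by auto
  have inv: "inv\<^bsub>?G\<^esub> x = - x" for x :: 'g
    by (rule group.inv_equality[OF grp]) (simp_all add: grp_of_def)
  have "subgrp H"
  proof
    show "0 \<in> H" using subgroup.one_closed[OF H(1)] by (simp add: grp_of_def)
    fix x y assume "x \<in> H" "y \<in> H"
    thus "x + y \<in> H" using subgroup.m_closed[OF H(1)] by (simp add: grp_of_def)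
  next
    fix x assume "x \<in> H"
    thus "- x \<in> H" using subgroup.m_inv_closed[OF H(1)] inv by metis
  qed
  thus ?thesis using H(2) am by blast
qed

theorem theorem5p1:
  fixes l :: nat
  assumes "l \<ge> 1"
  shows "(\<exists>C :: (nat \<Rightarrow> 'g::{group_add,finite} \<Rightarrow> 'k::{field,finite}) set.
            quasi_G_code l C \<and> ga_dual l C = C)
    \<longleftrightarrow> ((card (UNIV :: 'k set) mod 4 = 1 \<and> 2 dvd l)
         \<or> (card (UNIV :: 'k set) mod 4 = 3 \<and> 4 dvd l)
         \<or> (even (card (UNIV :: 'k set)) \<and> (2 dvd l \<or> 2 dvd card (UNIV :: 'g set))))"
proof
  assume "\<exists>C :: (nat \<Rightarrow> 'g \<Rightarrow> 'k) set. quasi_G_code l C \<and> ga_dual l C = C"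
  then obtain C :: "(nat \<Rightarrow> 'g \<Rightarrow> 'k) set" where qc: "quasi_G_code l C" and sd: "ga_dual l C = C"
    by blast
  show "(card (UNIV :: 'k set) mod 4 = 1 \<and> 2 dvd l)
         \<or> (card (UNIV :: 'k set) mod 4 = 3 \<and> 4 dvd l)
         \<or> (even (card (UNIV :: 'k set)) \<and> (2 dvd l \<or> 2 dvd card (UNIV :: 'g set)))"
  proof (cases "(2::'k) = 0")
    case True
    have qe: "even (card (UNIV :: 'k set))" using True two_zero_iff by blast
    have P: "subgrp {0::'g}" by unfold_locales auto
    have "(of_nat (card {0::'g}) :: 'k) \<noteq> 0" by simp
    then obtain k where k: "l * card (range (subgrp.lcos {0::'g})) = 2 * k"
      using reduce[OF P _ qc sd] by blast
    have "card {0::'g} * card (range (subgrp.lcos {0::'g})) = card (UNIV::'g set)"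
      by (rule subgrp.card_part[OF P])
    hence "card (range (subgrp.lcos {0::'g})) = card (UNIV::'g set)" by simp
    hence "even (l * card (UNIV::'g set))" using k by simp
    hence "2 dvd l \<or> 2 dvd card (UNIV :: 'g set)" by simp
    thus ?thesis using qe by blast
  next
    case False
    have qo: "odd (card (UNIV :: 'k set))" using False two_zero_iff by blast
    obtain P :: "'g set" and a m where P: "subgrp P" and cP: "card P = 2 ^ a"
      and n: "card (UNIV::'g set) = 2 ^ a * m" and mo: "odd m"
      using sylow2 by blast
    have "(of_nat (card P) :: 'k) \<noteq> 0" using cP False by simp
    then obtain k where k: "l * card (range (subgrp.lcos P)) = 2 * k"
      and kz: "odd k \<longrightarrow> (\<exists>z::'k. z * z = -1)"
      using reduce[OF P _ qc sd] by blast
    have "card P * card (range (subgrp.lcos P)) = card (UNIV::'g set)"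
      by (rule subgrp.card_part[OF P])
    hence cR: "card (range (subgrp.lcos P)) = m" using cP n by simp
    have lm: "l * m = 2 * k" using k cR by simp
    have le: "even l" using lm mo by (metis dvd_triv_left even_mult_iff)
    consider "card (UNIV :: 'k set) mod 4 = 1" | "card (UNIV :: 'k set) mod 4 = 3"
      using odd_mod4[OF qo] by blast
    thus ?thesis
    proof cases
      case 1 thus ?thesis using le by blast
    next
      case 2
      note c3 = this
      have "even k"
      proof (rule ccontr)
        assume "odd k"
        then obtain z :: 'k where "z * z = -1" using kz by blast
        hence "card (UNIV :: 'k set) mod 4 = 1" using sqrt_m1_mod4[OF qo] by blast
        thus False using c3 by simp
      qed
      then obtain k' where k': "k = 2 * k'" by blast
      obtain l' where l': "l = 2 * l'" using le by blast
      have "l' * m = 2 * k'" using lm k' l' by simp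
      hence "even l'" using mo by (metis dvd_triv_left even_mult_iff)
      hence "4 dvd l" using l' by auto
      thus ?thesis using c3 by blast
    qed
  qed
next
  assume h: "(card (UNIV :: 'k set) mod 4 = 1 \<and> 2 dvd l)
         \<or> (card (UNIV :: 'k set) mod 4 = 3 \<and> 4 dvd l)
         \<or> (even (card (UNIV :: 'k set)) \<and> (2 dvd l \<or> 2 dvd card (UNIV :: 'g set)))"
  have two_ok: "\<exists>C :: (nat \<Rightarrow> 'g \<Rightarrow> 'k) set. quasi_G_code l C \<and> ga_dual l C = C"
    if i: "(i::'k) * i = -1" and l2: "2 dvd l" for i
    using blk_code_ok[OF blkB2[OF i] l2, where 'g='g] by blast
  consider "card (UNIV :: 'k set) mod 4 = 1 \<and> 2 dvd l" | "card (UNIV :: 'k set) mod 4 = 3 \<and> 4 dvd l"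
    | "even (card (UNIV :: 'k set)) \<and> 2 dvd l" | "even (card (UNIV :: 'k set)) \<and> 2 dvd card (UNIV :: 'g set)"
    using h by blast
  thus "\<exists>C :: (nat \<Rightarrow> 'g \<Rightarrow> 'k) set. quasi_G_code l C \<and> ga_dual l C = C"
  proof cases
    case 1
    then obtain i :: 'k where "i * i = -1" using sqrt_m1_exists by blast
    thus ?thesis using two_ok 1 by blast
  next
    case 2
    hence "odd (card (UNIV :: 'k set))" by presburger
    then obtain a b :: 'k where ab: "a * a + b * b = -1" using sum_two_sq by blast
    show ?thesis using blk_code_ok[OF blkB4[OF ab], of l, where 'g='g] 2 by blast
  next
    case 3
    hence "(2::'k) = 0" using two_zero_iff by blast
    hence "(1::'k) * 1 = -1" by (metis add_eq_0_iff mult_1 one_add_one)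
    thus ?thesis using two_ok 3 by blast
  next
    case 4
    hence two: "(2::'k) = 0" using two_zero_iff by blast
    obtain t :: 'g where t: "t \<noteq> 0" "t + t = 0" using even_group_inv 4 by blast
    show ?thesis using gcode_ok[OF t two, of l] by blast
  qed
qed

end
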